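(* Let $A\in H_n$ and $B\in H_k$ be neither positive semidefinite nor negative semidefinite, with $\|A_+\|_\infty=\|B_+\|_\infty$ and $\|A_-\|_\infty=\|B_-\|_\infty$. Then there exist a positive unital linear map $\Phi:H_n\to H_k$ with $\Phi(A)=B$ and a positive unital linear map $\Phi':H_k\to H_n$ with $\Phi'(B)=A$.
   Context: $H_n$ denotes the $n\times n$ complex Hermitian matrices. A linear map $\Phi:H_n\to H_k$ is positive if it maps positive semidefinite matrices to positive semidefinite matrices and unital if $\Phi(\mathbb{1})=\mathbb{1}$. Every $A\in H_n$ decomposes uniquely as $A=A_+-A_-$ with $A_+,A_-$ positive semidefinite and $A_+A_-=0$. $\|\cdot\|_\infty$ is the operator norm. *)

theory Defs
  imports "HOL-Analysis.Analysis"
begin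

definition conj_transpose :: "complex^'n^'m \<Rightarrow> complex^'m^'n" where
  "conj_transpose A = (\<chi> i j. cnj (A $ j $ i))"

definition hermitian :: "complex^'n^'n \<Rightarrow> bool" where
  "hermitian A \<longleftrightarrow> conj_transpose A = A"

definition quad_form :: "complex^'n^'n \<Rightarrow> complex^'n \<Rightarrow> complex" where
  "quad_form A v = (\<Sum>i\<in>UNIV. \<Sum>j\<in>UNIV. cnj (v $ i) * A $ i $ j * v $ j)"

definition psd :: "complex^'n^'n \<Rightarrow> bool" where
  "psd A \<longleftrightarrow> hermitian A \<and> (\<forall>v. Im (quad_form A v) = 0 \<and> 0 \<le> Re (quad_form A v))"

text \<open>Unique decomposition A = A_+ - A_- with A_+, A_- psd and A_+ A_- = 0.\<close>
definition pos_part :: "complex^'n^'n \<Rightarrow> complex^'n^'n" where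
  "pos_part A = (THE P. \<exists>N. A = P - N \<and> psd P \<and> psd N \<and> P ** N = 0)"

definition neg_part :: "complex^'n^'n \<Rightarrow> complex^'n^'n" where
  "neg_part A = (THE N. \<exists>P. A = P - N \<and> psd P \<and> psd N \<and> P ** N = 0)"

definition op_norm :: "complex^'n^'m \<Rightarrow> real" where
  "op_norm A = onorm (\<lambda>x. A *v x)"

text \<open>A positive unital (real-)linear map H_n -> H_k, given by its action on H_n.\<close>
definition positive_unital_map :: "(complex^'n^'n \<Rightarrow> complex^'k^'k) \<Rightarrow> bool" where
  "positive_unital_map \<Phi> \<longleftrightarrow>
     (\<forall>A. hermitian A \<longrightarrow> hermitian (\<Phi> A)) \<and>
     (\<forall>A B. hermitian A \<longrightarrow> hermitian B \<longrightarrow> \<Phi> (A + B) = \<Phi> A + \<Phi> B) \<and>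
     (\<forall>(r::real) A. hermitian A \<longrightarrow> \<Phi> (r *\<^sub>R A) = r *\<^sub>R \<Phi> A) \<and>
     (\<forall>A. psd A \<longrightarrow> psd (\<Phi> A)) \<and>
     \<Phi> (mat 1) = mat 1"

end

theory Submission
  imports Defs
begin

definition cinner :: "complex^'n \<Rightarrow> complex^'n \<Rightarrow> complex" where
  "cinner x y = (\<Sum>i\<in>UNIV. cnj (x$i) * y$i)"

lemma cinner_add_right: "cinner x (y + z) = cinner x y + cinner x z"
  by (simp add: cinner_def distrib_left sum.distrib)
lemma cinner_add_left: "cinner (x + y) z = cinner x z + cinner y z"
  by (simp add: cinner_def distrib_right sum.distrib)
lemma cinner_diff_right: "cinner x (y - z) = cinner x y - cinner x z"
  by (simp add: cinner_def right_diff_distrib sum_subtractf)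
lemma cinner_diff_left: "cinner (x - y) z = cinner x z - cinner y z"
  by (simp add: cinner_def left_diff_distrib sum_subtractf)
lemma cinner_scale_right: "cinner x (c *s y) = c * cinner x y"
  by (simp add: cinner_def sum_distrib_left algebra_simps)
lemma cinner_scale_left: "cinner (c *s x) y = cnj c * cinner x y"
  by (simp add: cinner_def sum_distrib_left algebra_simps)
lemma cinner_zero_right[simp]: "cinner x 0 = 0"
  by (simp add: cinner_def)
lemma cinner_zero_left[simp]: "cinner 0 x = 0"
  by (simp add: cinner_def)
lemma cinner_sum_right: "cinner x (sum f S) = (\<Sum>s\<in>S. cinner x (f s))"
  by (induction S rule: infinite_finite_induct) (simp_all add: cinner_add_right)
lemma cinner_sum_left: "cinner (sum f S) x = (\<Sum>s\<in>S. cinner (f s) x)"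
  by (induction S rule: infinite_finite_induct) (simp_all add: cinner_add_left)
lemma cinner_cnj: "cnj (cinner x y) = cinner y x"
  by (simp add: cinner_def mult.commute)
lemma cinner_self: "cinner x x = of_real (norm x ^ 2)"
proof -
  have "norm x ^ 2 = (\<Sum>i\<in>UNIV. (cmod (x$i))^2)"
    by (simp add: norm_vec_def L2_set_def sum_nonneg)
  hence "of_real (norm x ^ 2) = (\<Sum>i\<in>UNIV. complex_of_real ((cmod (x$i))^2))" by simp
  also have "\<dots> = cinner x x"
    unfolding cinner_def complex_norm_square by (simp add: mult.commute)
  finally show ?thesis by simp
qed
lemma cinner_self_eq_0: "cinner x x = 0 \<longleftrightarrow> x = 0"
  by (simp add: cinner_self)
lemma re_cinner_self: "Re (cinner x x) = norm x ^ 2"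
  by (simp add: cinner_self)

lemma norm_scale: "norm (c *s x) = cmod c * norm (x::complex^'n)"
proof -
  have "norm (c *s x) ^ 2 = Re (cnj c * (c * cinner x x))"
    by (simp only: re_cinner_self[symmetric] cinner_scale_left cinner_scale_right) (metis mult.left_commute)
  also have "\<dots> = Re (complex_of_real ((cmod c)^2) * cinner x x)"
    by (subst complex_norm_square) (metis mult.left_commute mult.assoc)
  also have "\<dots> = (cmod c * norm x)^2"
    by (simp add: cinner_self power_mult_distrib del: of_real_power)
  finally show ?thesis by (simp add: power2_eq_iff_nonneg)
qed

lemma quad_form_cinner: "quad_form A v = cinner v (A *v v)"
  by (simp add: quad_form_def cinner_def matrix_vector_mult_def sum_distrib_left mult.assoc)

lemma hermitian_adj:
  assumes "hermitian A"
  shows "cinner x (A *v y) = cinner (A *v x) y"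
proof -
  have h: "\<And>i j. cnj (A $ j $ i) = A $ i $ j"
    using assms unfolding hermitian_def conj_transpose_def vec_eq_iff by auto
  have "cinner x (A *v y) = (\<Sum>i\<in>UNIV. \<Sum>j\<in>UNIV. cnj (x$i) * A$i$j * y$j)"
    by (simp add: cinner_def matrix_vector_mult_def sum_distrib_left mult.assoc)
  also have "\<dots> = (\<Sum>j\<in>UNIV. \<Sum>i\<in>UNIV. cnj (x$i) * A$i$j * y$j)"
    by (rule sum.swap)
  also have "\<dots> = cinner (A *v x) y"
    by (simp add: cinner_def matrix_vector_mult_def sum_distrib_left sum_distrib_right h ac_simps)
  finally show ?thesis .
qed

lemma hermitian_quad_real:
  assumes "hermitian A" shows "Im (quad_form A v) = 0"
proof -
  have "cnj (quad_form A v) = quad_form A v"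
    by (simp add: quad_form_cinner cinner_cnj hermitian_adj[OF assms])
  thus ?thesis by (metis Reals_cnj_iff complex_is_Real_iff)
qed

lemma psd_iff: "psd A \<longleftrightarrow> hermitian A \<and> (\<forall>v. 0 \<le> Re (quad_form A v))"
  using hermitian_quad_real unfolding psd_def by blast

lemma quad_zero:
  fixes d q :: real
  assumes "\<And>t. 2*t*d + t^2*q \<le> 0"
  shows "d = 0"
proof (rule ccontr)
  assume "d \<noteq> 0"
  define p where "p = \<bar>q\<bar> + 1"
  have p: "p > 0" "2*p + q > 0" by (auto simp: p_def)
  have "2*(d/p)*d + (d/p)^2*q = d^2 * (2*p + q) / p^2"
    using p by (simp add: field_simps power2_eq_square)
  moreover have "d^2 * (2*p + q) / p^2 > 0" using \<open>d \<noteq> 0\<close> p by simp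
  ultimately show False using assms[of "d/p"] by linarith
qed

lemma expand_quad:
  assumes "hermitian A"
  shows "Re (cinner (u + of_real t *s w) (A *v (u + of_real t *s w))) =
    Re (cinner u (A *v u)) + 2*t*Re (cinner w (A *v u)) + t^2 * Re (cinner w (A *v w))"
proof -
  have h: "cinner u (A *v w) = cnj (cinner w (A *v u))"
    by (simp add: hermitian_adj[OF assms] cinner_cnj)
  show ?thesis
    by (simp add: matrix_vector_right_distrib vector_scalar_commute cinner_add_left cinner_add_right
        cinner_scale_left cinner_scale_right h power2_eq_square algebra_simps)
qed

lemma expand_norm:
  shows "norm (u + of_real t *s w) ^ 2 = norm u ^ 2 + 2*t*Re (cinner w u) + t^2 * norm w ^ 2"
proof -
  have h: "cinner u w = cnj (cinner w u)"
    by (simp add: cinner_cnj)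
  have "norm (u + of_real t *s w) ^ 2 = Re (cinner (u + of_real t *s w) (u + of_real t *s w))"
    by (simp add: re_cinner_self)
  also have "\<dots> = norm u ^ 2 + 2*t*Re (cinner w u) + t^2 * norm w ^ 2"
    by (simp add: cinner_add_left cinner_add_right
        cinner_scale_left cinner_scale_right h power2_eq_square algebra_simps re_cinner_self)
  finally show ?thesis .
qed

lemma continuous_cinner: "continuous_on UNIV (\<lambda>v. cinner f v)"
  unfolding cinner_def by (intro continuous_intros)

lemma continuous_quad: "continuous_on UNIV (\<lambda>v. Re (cinner v (A *v v)))"
  unfolding cinner_def matrix_vector_mult_def by (intro continuous_intros)

lemma eig_exists:
  assumes herm: "hermitian A" and F: "finite F" "\<forall>f\<in>F. \<exists>c. A *v f = c *s f"
    and w: "w \<noteq> 0" "\<forall>f\<in>F. cinner f w = 0"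
  shows "\<exists>u. norm u = 1 \<and> (\<forall>f\<in>F. cinner f u = 0) \<and> (\<exists>M::real. A *v u = of_real M *s u)"
proof -
  define S where "S = {v. \<forall>f\<in>F. cinner f v = 0}"
  have Sadd: "x \<in> S \<Longrightarrow> y \<in> S \<Longrightarrow> x + y \<in> S" for x y by (simp add: S_def cinner_add_right)
  have Sscale: "x \<in> S \<Longrightarrow> c *s x \<in> S" for x c by (simp add: S_def cinner_scale_right)
  have Sinv: "x \<in> S \<Longrightarrow> A *v x \<in> S" for x
  proof -
    assume x: "x \<in> S"
    { fix f assume f: "f \<in> F"
      then obtain c where c: "A *v f = c *s f" using F by blast
      have "cinner f (A *v x) = cinner (A *v f) x" by (rule hermitian_adj[OF herm])
      also have "\<dots> = 0" using x f by (simp add: c cinner_scale_left S_def)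
      finally have "cinner f (A *v x) = 0" . }
    thus ?thesis by (simp add: S_def)
  qed
  have "S = (\<Inter>f\<in>F. {v. cinner f v = 0})" by (auto simp: S_def)
  moreover have "closed {v. cinner f v = 0}" for f
    using continuous_closed_preimage_constant[OF continuous_cinner[of f] closed_UNIV, of 0]
    by simp
  ultimately have clS: "closed S" by auto
  define K where "K = S \<inter> sphere 0 1"
  have cK: "compact K" unfolding K_def by (intro closed_Int_compact clS compact_sphere)
  define w0 where "w0 = complex_of_real (1 / norm w) *s w"
  have "w0 \<in> K" using w unfolding K_def w0_def
    by (auto simp: S_def cinner_scale_right norm_scale norm_divide)
  hence neK: "K \<noteq> {}" by auto
  define g where "g v = Re (cinner v (A *v v))" for v
  have cg: "continuous_on K g" unfolding g_def
    using continuous_quad continuous_on_subset by blast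
  obtain u where u: "u \<in> K" and umax: "\<And>y. y \<in> K \<Longrightarrow> g y \<le> g u"
    using continuous_attains_sup[OF cK neK cg] by blast
  define M where "M = g u"
  have uS: "u \<in> S" and nu: "norm u = 1" using u by (auto simp: K_def)
  have bnd: "g v \<le> M * norm v ^ 2" if v: "v \<in> S" for v
  proof (cases "v = 0")
    case True thus ?thesis by (simp add: g_def)
  next
    case False
    define r where "r = 1 / norm v"
    have r: "r > 0" using False by (simp add: r_def)
    have "complex_of_real r *s v \<in> K" using v False
      by (auto simp: K_def Sscale norm_scale r_def norm_divide)
    hence "g (complex_of_real r *s v) \<le> M" using umax M_def by blast
    moreover have "g (complex_of_real r *s v) = r^2 * g v"
      by (simp add: g_def vector_scalar_commute cinner_scale_left cinner_scale_right power2_eq_square)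
    ultimately have "r^2 * g v \<le> M" by simp
    have e: "r^2 * norm v^2 = 1" using False by (simp add: r_def power_divide)
    have "g v = (r^2 * g v) * norm v^2" using e by (simp add: algebra_simps)
    also have "\<dots> \<le> M * norm v^2" by (rule mult_right_mono) (use \<open>r^2 * g v \<le> M\<close> in auto)
    finally show ?thesis .
  qed
  define D where "D x = cinner x (A *v u) - of_real M * cinner x u" for x
  have ReD: "Re (D x) = 0" if x: "x \<in> S" for x
  proof -
    let ?q = "g x - M * norm x ^ 2"
    have "2*t*Re (D x) + t^2*?q \<le> 0" for t
    proof -
      have "u + of_real t *s x \<in> S" using uS x Sadd Sscale by blast
      hence "g (u + of_real t *s x) \<le> M * norm (u + of_real t *s x) ^ 2" by (rule bnd)
      hence "g u + 2*t*Re (cinner x (A *v u)) + t^2 * g x \<le>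
             M * (norm u ^ 2 + 2*t*Re (cinner x u) + t^2 * norm x ^ 2)"
        unfolding g_def expand_quad[OF herm] expand_norm .
      thus ?thesis using nu by (simp add: D_def M_def algebra_simps)
    qed
    thus ?thesis by (rule quad_zero)
  qed
  have D0: "D x = 0" if x: "x \<in> S" for x
  proof -
    have "Re (D (\<i> *s x)) = 0" using x Sscale ReD by blast
    moreover have "D (\<i> *s x) = - \<i> * D x"
      by (simp add: D_def cinner_scale_left algebra_simps)
    ultimately have "Im (D x) = 0" by simp
    thus ?thesis using ReD[OF x] by (simp add: complex_eq_iff)
  qed
  define z where "z = A *v u - complex_of_real M *s u"
  have "z \<in> S"
    using Sinv[OF uS] uS by (simp add: S_def z_def cinner_diff_right cinner_scale_right)
  hence "D z = 0" by (rule D0)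
  moreover have "D z = cinner z z" by (simp add: D_def z_def cinner_diff_right cinner_scale_right)
  ultimately have "z = 0" by (simp add: cinner_self_eq_0)
  hence "A *v u = of_real M *s u" by (simp add: z_def)
  thus ?thesis using nu uS by (auto simp: S_def)
qed

definition ON :: "(complex^'n) set \<Rightarrow> bool" where
  "ON E \<longleftrightarrow> (\<forall>e\<in>E. \<forall>f\<in>E. cinner e f = (if e = f then 1 else 0))"

lemma coef:
  assumes "ON E" "finite E" "f \<in> E"
  shows "cinner f (\<Sum>e\<in>E. a e *s e) = a f"
proof -
  have "cinner f (\<Sum>e\<in>E. a e *s e) = (\<Sum>e\<in>E. a e * (if f = e then 1 else 0))"
    using assms(1,3) unfolding ON_def by (simp add: cinner_sum_right cinner_scale_right)
  also have "\<dots> = a f" using assms(2,3) by (simp add: if_distrib sum.delta cong: if_cong)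
  finally show ?thesis .
qed

lemma inner_cinner: "inner x y = Re (cinner x y)"
  by (simp add: inner_vec_def inner_complex_def cinner_def Re_sum)

lemma ON_card:
  fixes E :: "(complex^'n) set"
  assumes "ON E" shows "finite E \<and> card E \<le> DIM(complex^'n)"
proof -
  have "pairwise orthogonal E"
    unfolding pairwise_def orthogonal_def
  proof (intro ballI impI)
    fix x y assume "x \<in> E" "y \<in> E" "x \<noteq> y"
    hence "cinner x y = 0" using assms unfolding ON_def by simp
    thus "x \<bullet> y = 0" by (simp add: inner_cinner)
  qed
  moreover have "0 \<notin> E"
  proof
    assume "0 \<in> E"
    hence "cinner 0 (0::complex^'n) = (if (0::complex^'n) = 0 then 1 else 0)"
      using assms unfolding ON_def by blast
    thus False by simp
  qed
  ultimately have "independent E" by (rule pairwise_orthogonal_independent)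
  thus ?thesis by (rule independent_bound)
qed

definition eigsys :: "complex^'n^'n \<Rightarrow> (complex^'n) set \<Rightarrow> (complex^'n \<Rightarrow> real) \<Rightarrow> bool" where
  "eigsys A E l \<longleftrightarrow> finite E \<and> ON E \<and> (\<forall>e\<in>E. A *v e = complex_of_real (l e) *s e)
     \<and> (\<forall>v. v = (\<Sum>e\<in>E. cinner e v *s e))"

lemma spectral:
  fixes A :: "complex^'n^'n"
  assumes herm: "hermitian A"
  shows "\<exists>E l. eigsys A E l"
proof -
  define good where "good F \<longleftrightarrow> finite F \<and> ON F \<and> (\<forall>f\<in>F. \<exists>c::real. A *v f = complex_of_real c *s f)"
    for F :: "(complex^'n) set"
  define C where "C = card ` {F. good F}"
  have "C \<subseteq> {..DIM(complex^'n)}" using ON_card unfolding C_def good_def by auto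
  hence finC: "finite C" by (rule finite_subset) simp
  have "good {}" by (simp add: good_def ON_def)
  hence neC: "C \<noteq> {}" unfolding C_def by blast
  obtain F where gF: "good F" and cF: "card F = Max C"
    using Max_in[OF finC neC] unfolding C_def by force
  have maxF: "card G \<le> card F" if "good G" for G
  proof -
    have "card G \<in> C" using that unfolding C_def by blast
    thus ?thesis using Max_ge[OF finC] cF by simp
  qed
  have finF: "finite F" and onF: "ON F" using gF by (auto simp: good_def)
  have span: "v = (\<Sum>e\<in>F. cinner e v *s e)" for v
  proof (rule ccontr)
    assume nv: "v \<noteq> (\<Sum>e\<in>F. cinner e v *s e)"
    define w where "w = v - (\<Sum>e\<in>F. cinner e v *s e)"
    have w0: "w \<noteq> 0" using nv by (simp add: w_def)
    have wF: "\<forall>f\<in>F. cinner f w = 0"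
      using coef[OF onF finF] by (simp add: w_def cinner_diff_right)
    have "\<forall>f\<in>F. \<exists>c. A *v f = c *s f" using gF unfolding good_def by blast
    then obtain u where u: "norm u = 1" "\<forall>f\<in>F. cinner f u = 0"
      and M: "\<exists>M::real. A *v u = of_real M *s u"
      using eig_exists[OF herm finF _ w0 wF] by blast
    have uu: "cinner u u = 1" using u by (simp add: cinner_self)
    have uF: "u \<notin> F" using u uu by auto
    have uF2: "\<forall>f\<in>F. cinner u f = 0"
    proof
      fix f assume "f \<in> F"
      hence "cnj (cinner f u) = 0" using u by simp
      thus "cinner u f = 0" by (simp add: cinner_cnj)
    qed
    have "ON (insert u F)"
      using onF u(2) uu uF uF2 unfolding ON_def by auto
    hence "good (insert u F)" using gF M by (auto simp: good_def)
    hence "card (insert u F) \<le> card F" by (rule maxF)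
    thus False using uF finF by simp
  qed
  define l where "l e = (SOME c::real. A *v e = complex_of_real c *s e)" for e
  have eq: "\<forall>e\<in>F. A *v e = complex_of_real (l e) *s e"
  proof
    fix e assume "e \<in> F"
    hence "\<exists>c::real. A *v e = complex_of_real c *s e" using gF by (auto simp: good_def)
    thus "A *v e = complex_of_real (l e) *s e" unfolding l_def by (rule someI_ex)
  qed
  have "eigsys A F l" unfolding eigsys_def
    apply (rule conjI, rule finF)
    apply (rule conjI, rule onF)
    apply (rule conjI, rule eq)
    by (rule allI, rule span)
  thus ?thesis by blast
qed



lemma mv_diff: "(M - N) *v v = M *v v - N *v (v::complex^'n)"
  by (simp add: vec_eq_iff matrix_vector_mult_def sum_subtractf algebra_simps)
lemma mv_neg: "(- M) *v v = - (M *v (v::complex^'n))"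
  by (simp add: vec_eq_iff matrix_vector_mult_def sum_negf)
lemma mv_scaleR: "(r *\<^sub>R M) *v v = complex_of_real r *s (M *v (v::complex^'n))"
  by (simp add: vec_eq_iff matrix_vector_mult_def) (simp add: scaleR_conv_of_real sum_distrib_left mult.assoc)
lemma mv_zero: "(0::complex^'n^'m) *v v = 0"
  by (simp add: vec_eq_iff matrix_vector_mult_def)
lemma mv_summ: "(sum F S) *v (v::complex^'n) = (\<Sum>s\<in>S. F s *v v)"
  by (induction S rule: infinite_finite_induct) (simp_all add: mv_zero matrix_vector_mult_add_rdistrib)

lemma hermitian_add: "hermitian M \<Longrightarrow> hermitian N \<Longrightarrow> hermitian (M + N)"
  by (simp add: hermitian_def conj_transpose_def vec_eq_iff)
lemma hermitian_diff: "hermitian M \<Longrightarrow> hermitian N \<Longrightarrow> hermitian (M - N)"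
  by (simp add: hermitian_def conj_transpose_def vec_eq_iff)
lemma hermitian_neg: "hermitian M \<Longrightarrow> hermitian (- M)"
  by (simp add: hermitian_def conj_transpose_def vec_eq_iff)
lemma hermitian_scaleR: "hermitian M \<Longrightarrow> hermitian (r *\<^sub>R M)"
  by (simp add: hermitian_def conj_transpose_def vec_eq_iff)
lemma hermitian_zero: "hermitian (0::complex^'n^'n)"
  by (simp add: hermitian_def conj_transpose_def vec_eq_iff)
lemma hermitian_mat1: "hermitian (mat 1 :: complex^'n^'n)"
  by (simp add: hermitian_def conj_transpose_def vec_eq_iff mat_def)
lemma hermitian_sum: "(\<And>s. s \<in> S \<Longrightarrow> hermitian (F s)) \<Longrightarrow> hermitian (sum F S)"
  by (induction S rule: infinite_finite_induct) (simp_all add: hermitian_zero hermitian_add)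

lemma quad_add: "quad_form (M + N) v = quad_form M v + quad_form N v"
  by (simp add: quad_form_cinner matrix_vector_mult_add_rdistrib cinner_add_right)
lemma quad_diff: "quad_form (M - N) v = quad_form M v - quad_form N v"
  by (simp add: quad_form_cinner mv_diff cinner_diff_right)
lemma quad_neg: "quad_form (- M) v = - quad_form M v"
  by (simp add: quad_form_def sum_negf)
lemma quad_scaleR: "quad_form (r *\<^sub>R M) v = complex_of_real r * quad_form M v"
  by (simp add: quad_form_cinner mv_scaleR cinner_scale_right)
lemma quad_mat1: "quad_form (mat 1) v = complex_of_real (norm v ^ 2)"
  by (simp add: quad_form_cinner cinner_self)

definition outer :: "real \<Rightarrow> complex^'n \<Rightarrow> complex^'n^'n" where
  "outer r e = (\<chi> i j. complex_of_real r * e$i * cnj (e$j))"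

lemma outer_mv: "outer r e *v v = (complex_of_real r * cinner e v) *s e"
  by (simp add: vec_eq_iff outer_def matrix_vector_mult_def cinner_def sum_distrib_left ac_simps)

lemma hermitian_outer: "hermitian (outer r e)"
  by (simp add: hermitian_def conj_transpose_def vec_eq_iff outer_def)

lemma outer_diff: "outer r e - outer s e = outer (r - s) e"
  by (simp add: vec_eq_iff outer_def algebra_simps)

definition Pm :: "(complex^'n) set \<Rightarrow> (complex^'n \<Rightarrow> real) \<Rightarrow> complex^'n^'n" where
  "Pm E c = (\<Sum>e\<in>E. outer (c e) e)"

lemma Pm_mv: "Pm E c *v v = (\<Sum>e\<in>E. (complex_of_real (c e) * cinner e v) *s e)"
  by (simp add: Pm_def mv_summ outer_mv)

lemma Pm_diff: "Pm E c - Pm E d = Pm E (\<lambda>e. c e - d e)"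
  by (simp add: Pm_def sum_subtractf[symmetric] outer_diff)

lemma hermitian_Pm: "hermitian (Pm E c)"
  unfolding Pm_def by (rule hermitian_sum) (rule hermitian_outer)

lemma Pm_quad: "quad_form (Pm E c) v = complex_of_real (\<Sum>e\<in>E. c e * (cmod (cinner e v))^2)"
proof -
  have "quad_form (Pm E c) v = (\<Sum>e\<in>E. complex_of_real (c e) * cinner e v * cinner v e)"
    by (simp add: quad_form_cinner Pm_mv cinner_sum_right cinner_scale_right)
  also have "\<dots> = (\<Sum>e\<in>E. complex_of_real (c e * (cmod (cinner e v))^2))"
  proof (rule sum.cong[OF refl])
    fix e
    have sq: "complex_of_real ((cmod (cinner e v))^2) = cinner e v * cinner v e"
      by (simp only: complex_norm_square cinner_cnj)
    show "complex_of_real (c e) * cinner e v * cinner v e = complex_of_real (c e * (cmod (cinner e v))^2)"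
      by (simp only: of_real_mult sq mult.assoc)
  qed
  finally show ?thesis by simp
qed

lemma psd_Pm: "(\<And>e. e \<in> E \<Longrightarrow> c e \<ge> 0) \<Longrightarrow> psd (Pm E c)"
  unfolding psd_iff using hermitian_Pm by (simp add: Pm_quad sum_nonneg)

lemma Pm_basis:
  assumes "ON E" "finite E" "f \<in> E"
  shows "Pm E c *v f = complex_of_real (c f) *s f"
proof -
  have "Pm E c *v f = (\<Sum>e\<in>E. if e = f then complex_of_real (c e) *s e else 0)"
    using assms(1,3) unfolding Pm_mv ON_def by (intro sum.cong) auto
  also have "\<dots> = complex_of_real (c f) *s f"
    using assms(2,3) by (simp add: sum.delta)
  finally show ?thesis .
qed

lemma Pm_cinner:
  assumes "ON E" "finite E" "f \<in> E"
  shows "cinner f (Pm E c *v v) = complex_of_real (c f) * cinner f v"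
  unfolding Pm_mv using coef[OF assms] .

lemma eigsysD:
  assumes "eigsys A E l"
  shows "finite E" "ON E" "\<And>e. e \<in> E \<Longrightarrow> A *v e = complex_of_real (l e) *s e"
    "\<And>v. v = (\<Sum>e\<in>E. cinner e v *s e)"
  using assms unfolding eigsys_def by blast+

lemma basis_action:
  assumes "eigsys A E l" "\<And>e. e \<in> E \<Longrightarrow> X *v e = complex_of_real (k e) *s e"
  shows "X *v v = Pm E k *v v"
proof -
  have sp: "v = (\<Sum>e\<in>E. cinner e v *s e)" using assms(1) unfolding eigsys_def by blast
  have "X *v v = X *v (\<Sum>e\<in>E. cinner e v *s e)" using sp by metis
  also have "\<dots> = (\<Sum>e\<in>E. cinner e v *s (X *v e))" by (simp add: vec.sum vector_scalar_commute)
  also have "\<dots> = Pm E k *v v" unfolding Pm_mv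
    by (intro sum.cong refl) (simp add: assms(2) vector_smult_assoc mult.commute)
  finally show ?thesis .
qed

lemma eig_Pm: "eigsys A E l \<Longrightarrow> A = Pm E l"
  unfolding matrix_eq by (intro allI basis_action) (auto dest: eigsysD(3))

lemma mv_right_diff: "M *v (x - y) = M *v x - M *v (y::complex^'n)"
  by (simp add: vec_eq_iff matrix_vector_mult_def sum_subtractf algebra_simps)

lemma cinner_neg_right: "cinner x (- y) = - cinner x y"
  by (simp add: cinner_def sum_negf)

lemma ON_norm: "ON E \<Longrightarrow> e \<in> E \<Longrightarrow> norm e = 1"
proof -
  assume "ON E" "e \<in> E"
  hence "cinner e e = 1" unfolding ON_def by simp
  hence "complex_of_real (norm e ^ 2) = 1" by (simp only: cinner_self)
  hence "norm e ^ 2 = 1" by (simp only: of_real_eq_1_iff)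
  thus "norm e = 1" using norm_ge_zero[of e] by (simp add: power2_eq_1_iff)
qed

lemma parseval:
  assumes "eigsys A E l"
  shows "norm v ^ 2 = (\<Sum>e\<in>E. (cmod (cinner e v))^2)"
proof -
  have sp: "v = (\<Sum>e\<in>E. cinner e v *s e)" using assms unfolding eigsys_def by blast
  have "complex_of_real (norm v ^ 2) = cinner v v" by (simp add: cinner_self)
  also have "\<dots> = cinner (\<Sum>e\<in>E. cinner e v *s e) v"
    using arg_cong[OF sp, of "\<lambda>x. cinner x v"] .
  also have "\<dots> = (\<Sum>e\<in>E. cnj (cinner e v) * cinner e v)"
    by (simp add: cinner_sum_left cinner_scale_left)
  also have "\<dots> = (\<Sum>e\<in>E. complex_of_real ((cmod (cinner e v))^2))"
    by (simp only: complex_norm_square mult.commute)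
  also have "\<dots> = complex_of_real (\<Sum>e\<in>E. (cmod (cinner e v))^2)" by simp
  finally show ?thesis using of_real_eq_iff by blast
qed

lemma max_split: "max x 0 - max (- x) 0 = (x::real)"
  by (simp add: max_def)

lemma decomp_exists:
  assumes es: "eigsys A E l"
  shows "A = Pm E (\<lambda>e. max (l e) 0) - Pm E (\<lambda>e. max (- l e) 0) \<and> psd (Pm E (\<lambda>e. max (l e) 0))
    \<and> psd (Pm E (\<lambda>e. max (- l e) 0)) \<and> Pm E (\<lambda>e. max (l e) 0) ** Pm E (\<lambda>e. max (- l e) 0) = 0"
proof (intro conjI)
  have fin: "finite E" by (rule eigsysD(1)[OF es])
  have on: "ON E" by (rule eigsysD(2)[OF es])
  show "A = Pm E (\<lambda>e. max (l e) 0) - Pm E (\<lambda>e. max (- l e) 0)"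
    unfolding Pm_diff max_split using eig_Pm[OF es] by simp
  show "psd (Pm E (\<lambda>e. max (l e) 0))" by (rule psd_Pm) simp
  show "psd (Pm E (\<lambda>e. max (- l e) 0))" by (rule psd_Pm) simp
  show "Pm E (\<lambda>e. max (l e) 0) ** Pm E (\<lambda>e. max (- l e) 0) = 0"
    unfolding matrix_eq
  proof
    fix v
    have "(Pm E (\<lambda>e. max (l e) 0) ** Pm E (\<lambda>e. max (- l e) 0)) *v v
        = Pm E (\<lambda>e. max (l e) 0) *v (Pm E (\<lambda>e. max (- l e) 0) *v v)"
      by (simp add: matrix_vector_mul_assoc)
    also have "\<dots> = (\<Sum>e\<in>E. 0)"
      unfolding Pm_mv[of E "\<lambda>e. max (l e) 0"]
    proof (rule sum.cong[OF refl])
      fix e assume e: "e \<in> E"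
      have "cinner e (Pm E (\<lambda>e. max (- l e) 0) *v v) = complex_of_real (max (- l e) 0) * cinner e v"
        by (rule Pm_cinner[OF on fin e])
      moreover have "max (l e) 0 * max (- l e) 0 = 0" by (simp add: max_def)
      ultimately show "(complex_of_real (max (l e) 0) * cinner e (Pm E (\<lambda>e. max (- l e) 0) *v v)) *s e = 0"
        by (simp add: mult.assoc[symmetric] of_real_mult[symmetric] del: of_real_mult)
    qed
    also have "\<dots> = 0 *v v" by (simp add: mv_zero)
    finally show "(Pm E (\<lambda>e. max (l e) 0) ** Pm E (\<lambda>e. max (- l e) 0)) *v v = 0 *v v" .
  qed
qed

lemma decomp_unique:
  assumes es: "eigsys A E l" and APN: "A = P - N" and pP: "psd P" and pN: "psd N" and PN0: "P ** N = 0"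
  shows "P = Pm E (\<lambda>e. max (l e) 0) \<and> N = Pm E (\<lambda>e. max (- l e) 0)"
proof -
  have hP: "hermitian P" and hN: "hermitian N" using pP pN by (auto simp: psd_def)
  have qP: "0 \<le> Re (cinner x (P *v x))" for x using pP by (simp add: psd_iff quad_form_cinner)
  have qN: "0 \<le> Re (cinner x (N *v x))" for x using pN by (simp add: psd_iff quad_form_cinner)
  have PN: "P *v (N *v v) = 0" for v by (simp add: matrix_vector_mul_assoc PN0 mv_zero)
  have NP: "N *v (P *v y) = 0" for y
  proof -
    define z where "z = N *v (P *v y)"
    have "cinner z z = cinner (N *v z) (P *v y)" unfolding z_def by (rule hermitian_adj[OF hN])
    also have "\<dots> = cinner (P *v (N *v z)) y" by (rule hermitian_adj[OF hP])
    also have "\<dots> = 0" by (simp add: PN)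
    finally show ?thesis by (simp add: cinner_self_eq_0 z_def)
  qed
  have Av: "A *v v = P *v v - N *v v" for v by (simp add: APN mv_diff)
  have act: "P *v e = complex_of_real (max (l e) 0) *s e \<and> N *v e = complex_of_real (max (- l e) 0) *s e"
    if e: "e \<in> E" for e
  proof -
    have Ae: "A *v e = complex_of_real (l e) *s e" using eigsysD(3)[OF es e] .
    have "P *v (A *v e) = P *v (P *v e)" by (simp add: Av mv_right_diff PN)
    hence PPe: "P *v (P *v e) = complex_of_real (l e) *s (P *v e)" by (simp add: Ae vector_scalar_commute)
    have "N *v (A *v e) = - (N *v (N *v e))" by (simp add: Av mv_right_diff NP)
    hence NNe: "N *v (N *v e) = - (complex_of_real (l e) *s (N *v e))"
      by (simp add: Ae vector_scalar_commute)
    show ?thesis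
    proof (cases "l e > 0")
      case True
      have "norm (N *v e) ^ 2 = Re (cinner (N *v e) (N *v e))" by (simp add: re_cinner_self)
      also have "\<dots> = Re (cinner e (N *v (N *v e)))" by (simp add: hermitian_adj[OF hN])
      also have "\<dots> = - l e * Re (cinner e (N *v e))"
        by (simp add: NNe cinner_neg_right cinner_scale_right)
      also have "\<dots> \<le> 0" using True qN[of e] by (simp add: mult_nonneg_nonneg)
      finally have "N *v e = 0" by simp
      moreover have "P *v e = A *v e + N *v e" by (simp add: Av)
      ultimately show ?thesis using True by (simp add: Ae)
    next
      case False
      have "norm (P *v e) ^ 2 = Re (cinner (P *v e) (P *v e))" by (simp add: re_cinner_self)
      also have "\<dots> = Re (cinner e (P *v (P *v e)))" by (simp add: hermitian_adj[OF hP])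
      also have "\<dots> = l e * Re (cinner e (P *v e))"
        by (simp add: PPe cinner_scale_right)
      also have "\<dots> \<le> 0" using False qP[of e] by (simp add: mult_nonpos_nonneg)
      finally have "P *v e = 0" by simp
      moreover have "N *v e = P *v e - A *v e" by (simp add: Av)
      ultimately show ?thesis using False by (simp add: Ae vec_eq_iff max_def)
    qed
  qed
  have "P = Pm E (\<lambda>e. max (l e) 0)"
    unfolding matrix_eq by (intro allI basis_action[OF es]) (use act in blast)
  moreover have "N = Pm E (\<lambda>e. max (- l e) 0)"
    unfolding matrix_eq by (intro allI basis_action[OF es]) (use act in blast)
  ultimately show ?thesis by blast
qed

lemma parts:
  assumes es: "eigsys A E l"
  shows "pos_part A = Pm E (\<lambda>e. max (l e) 0) \<and> neg_part A = Pm E (\<lambda>e. max (- l e) 0)"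
proof
  show "pos_part A = Pm E (\<lambda>e. max (l e) 0)"
    unfolding pos_part_def
  proof (rule the_equality)
    show "\<exists>N. A = Pm E (\<lambda>e. max (l e) 0) - N \<and> psd (Pm E (\<lambda>e. max (l e) 0)) \<and> psd N \<and> Pm E (\<lambda>e. max (l e) 0) ** N = 0"
      using decomp_exists[OF es] by blast
  next
    fix P assume "\<exists>N. A = P - N \<and> psd P \<and> psd N \<and> P ** N = 0"
    thus "P = Pm E (\<lambda>e. max (l e) 0)" using decomp_unique[OF es] by blast
  qed
  show "neg_part A = Pm E (\<lambda>e. max (- l e) 0)"
    unfolding neg_part_def
  proof (rule the_equality)
    show "\<exists>P. A = P - Pm E (\<lambda>e. max (- l e) 0) \<and> psd P \<and> psd (Pm E (\<lambda>e. max (- l e) 0)) \<and> P ** Pm E (\<lambda>e. max (- l e) 0) = 0"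
      using decomp_exists[OF es] by blast
  next
    fix N assume "\<exists>P. A = P - N \<and> psd P \<and> psd N \<and> P ** N = 0"
    thus "N = Pm E (\<lambda>e. max (- l e) 0)" using decomp_unique[OF es] by blast
  qed
qed

lemma linear_mv: "linear (\<lambda>x::complex^'n. M *v x)"
  by (intro linearI) (simp_all add: vec_eq_iff matrix_vector_mult_def scaleR_sum_right distrib_left sum.distrib)

lemma opnorm_Pm:
  assumes es: "eigsys A E l" and c: "\<And>e. e \<in> E \<Longrightarrow> 0 \<le> c e" and e0: "e0 \<in> E"
    and mx: "\<And>e. e \<in> E \<Longrightarrow> c e \<le> c e0"
  shows "op_norm (Pm E c) = c e0"
proof -
  have fin: "finite E" by (rule eigsysD(1)[OF es])
  have on: "ON E" by (rule eigsysD(2)[OF es])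
  have c0: "0 \<le> c e0" using c e0 by blast
  have bl: "bounded_linear (\<lambda>x. Pm E c *v x)" using linear_mv linear_conv_bounded_linear by blast
  have up: "norm (Pm E c *v x) \<le> c e0 * norm x" for x
  proof -
    have "norm (Pm E c *v x) ^ 2 = (\<Sum>e\<in>E. (cmod (cinner e (Pm E c *v x)))^2)" by (rule parseval[OF es])
    also have "\<dots> = (\<Sum>e\<in>E. (c e)^2 * (cmod (cinner e x))^2)"
      by (intro sum.cong refl) (simp add: Pm_cinner[OF on fin] norm_mult power_mult_distrib)
    also have "\<dots> \<le> (\<Sum>e\<in>E. (c e0)^2 * (cmod (cinner e x))^2)"
    proof (rule sum_mono)
      fix e assume "e \<in> E"
      hence "c e \<le> c e0" "0 \<le> c e" using c mx by auto
      hence "(c e)^2 \<le> (c e0)^2" by (rule power_mono)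
      thus "(c e)^2 * (cmod (cinner e x))^2 \<le> (c e0)^2 * (cmod (cinner e x))^2"
        by (rule mult_right_mono) simp
    qed
    also have "\<dots> = (c e0 * norm x)^2"
      by (simp add: parseval[OF es, of x] sum_distrib_left power_mult_distrib)
    finally have "norm (Pm E c *v x) ^ 2 \<le> (c e0 * norm x)^2" .
    moreover have "0 \<le> c e0 * norm x" using c0 by simp
    ultimately show ?thesis by (rule power2_le_imp_le)
  qed
  have "op_norm (Pm E c) \<le> c e0" unfolding op_norm_def by (rule onorm_le) (rule up)
  moreover have "c e0 \<le> op_norm (Pm E c)"
  proof -
    have "norm (Pm E c *v e0) / norm e0 \<le> op_norm (Pm E c)"
      unfolding op_norm_def by (rule le_onorm[OF bl])
    moreover have "norm (Pm E c *v e0) / norm e0 = c e0"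
      using ON_norm[OF on e0] c0 by (simp add: Pm_basis[OF on fin e0] norm_scale)
    ultimately show ?thesis by simp
  qed
  ultimately show ?thesis by simp
qed

lemma quad_eig: "eigsys A E l \<Longrightarrow> Re (quad_form A v) = (\<Sum>e\<in>E. l e * (cmod (cinner e v))^2)"
  by (subst eig_Pm) (auto simp: Pm_quad)

lemma key:
  fixes A :: "complex^'n^'n"
  assumes herm: "hermitian A" and np: "\<not> psd A" and nn: "\<not> psd (- A)"
  shows "\<exists>u w. norm u = 1 \<and> norm w = 1 \<and>
    A *v u = complex_of_real (op_norm (pos_part A)) *s u \<and>
    A *v w = complex_of_real (- op_norm (neg_part A)) *s w \<and>
    op_norm (pos_part A) > 0 \<and> op_norm (neg_part A) > 0 \<and>
    (\<forall>v. Re (quad_form A v) \<le> op_norm (pos_part A) * norm v ^ 2 \<and>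
         - op_norm (neg_part A) * norm v ^ 2 \<le> Re (quad_form A v))"
proof -
  obtain E l where es: "eigsys A E l" using spectral[OF herm] by blast
  have fin: "finite E" by (rule eigsysD(1)[OF es])
  have on: "ON E" by (rule eigsysD(2)[OF es])
  have Ae: "\<And>e. e \<in> E \<Longrightarrow> A *v e = complex_of_real (l e) *s e" by (rule eigsysD(3)[OF es])
  have neE: "E \<noteq> {}"
  proof
    assume "E = {}"
    have "((\<chi> i. 1) :: complex^'n) = (\<Sum>e\<in>E. cinner e (\<chi> i. 1) *s e)" by (rule eigsysD(4)[OF es])
    also have "\<dots> = 0" using \<open>E = {}\<close> by simp
    finally have "((\<chi> i. 1) :: complex^'n) = 0" .
    thus False by (simp add: vec_eq_iff)
  qed
  obtain e0 where e0: "e0 \<in> E" "l e0 = Max (l ` E)"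
  proof -
    have "Max (l ` E) \<in> l ` E" using fin neE by (intro Max_in) auto
    then obtain x where "x \<in> E" "Max (l ` E) = l x" by blast
    thus ?thesis using that[of x] by simp
  qed
  have mx: "l e \<le> l e0" if "e \<in> E" for e using e0 fin that by simp
  obtain e1 where e1: "e1 \<in> E" "l e1 = Min (l ` E)"
  proof -
    have "Min (l ` E) \<in> l ` E" using fin neE by (intro Min_in) auto
    then obtain x where "x \<in> E" "Min (l ` E) = l x" by blast
    thus ?thesis using that[of x] by simp
  qed
  have mn: "l e1 \<le> l e" if "e \<in> E" for e using e1 fin that by simp
  have qA: "Re (quad_form A v) = (\<Sum>e\<in>E. l e * (cmod (cinner e v))^2)" for v by (rule quad_eig[OF es])
  have pos: "l e0 > 0"
  proof (rule ccontr)
    assume "\<not> l e0 > 0"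
    hence "l e \<le> 0" if "e \<in> E" for e using mx[OF that] by simp
    hence "Re (quad_form A v) \<le> 0" for v unfolding qA by (intro sum_nonpos mult_nonpos_nonneg) auto
    hence "psd (- A)" by (simp add: psd_iff hermitian_neg[OF herm] quad_neg)
    with nn show False by simp
  qed
  have neg: "l e1 < 0"
  proof (rule ccontr)
    assume "\<not> l e1 < 0"
    hence "l e \<ge> 0" if "e \<in> E" for e using mn[OF that] by simp
    hence "Re (quad_form A v) \<ge> 0" for v unfolding qA by (intro sum_nonneg mult_nonneg_nonneg) auto
    hence "psd A" by (simp add: psd_iff herm)
    with np show False by simp
  qed
  have pp: "op_norm (pos_part A) = l e0"
  proof -
    have "op_norm (Pm E (\<lambda>e. max (l e) 0)) = max (l e0) 0"
      by (rule opnorm_Pm[OF es _ e0(1)]) (use mx in \<open>force simp: max_def\<close>)+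
    thus ?thesis using parts[OF es] pos by simp
  qed
  have nnp: "op_norm (neg_part A) = - l e1"
  proof -
    have "op_norm (Pm E (\<lambda>e. max (- l e) 0)) = max (- l e1) 0"
      by (rule opnorm_Pm[OF es _ e1(1)]) (use mn in \<open>force simp: max_def\<close>)+
    thus ?thesis using parts[OF es] neg by simp
  qed
  have bnd: "Re (quad_form A v) \<le> l e0 * norm v ^ 2 \<and> l e1 * norm v ^ 2 \<le> Re (quad_form A v)" for v
  proof
    have "Re (quad_form A v) \<le> (\<Sum>e\<in>E. l e0 * (cmod (cinner e v))^2)"
      unfolding qA by (intro sum_mono mult_right_mono) (auto simp: mx)
    thus "Re (quad_form A v) \<le> l e0 * norm v ^ 2"
      by (simp add: parseval[OF es, of v] sum_distrib_left)
    have "(\<Sum>e\<in>E. l e1 * (cmod (cinner e v))^2) \<le> Re (quad_form A v)"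
      unfolding qA by (intro sum_mono mult_right_mono) (auto simp: mn)
    thus "l e1 * norm v ^ 2 \<le> Re (quad_form A v)"
      by (simp add: parseval[OF es, of v] sum_distrib_left)
  qed
  show ?thesis
    apply (rule exI[of _ e0], rule exI[of _ e1])
    using ON_norm[OF on e0(1)] ON_norm[OF on e1(1)] Ae[OF e0(1)] Ae[OF e1(1)] pos neg bnd
    by (simp add: pp nnp)
qed

lemma comb1:
  fixes B I :: "'v::real_vector"
  assumes "a + b \<noteq> 0"
  shows "a *\<^sub>R ((1/(a+b)) *\<^sub>R (B + b *\<^sub>R I)) + (-b) *\<^sub>R ((1/(a+b)) *\<^sub>R (a *\<^sub>R I - B)) = B"
proof -
  have "a *\<^sub>R ((1/(a+b)) *\<^sub>R (B + b *\<^sub>R I)) + (-b) *\<^sub>R ((1/(a+b)) *\<^sub>R (a *\<^sub>R I - B))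
      = (a/(a+b)) *\<^sub>R B + (b/(a+b)) *\<^sub>R B"
    by (simp add: scaleR_add_right scaleR_diff_right scaleR_scaleR algebra_simps)
  also have "\<dots> = (a/(a+b) + b/(a+b)) *\<^sub>R B" by (rule scaleR_add_left[symmetric])
  also have "a/(a+b) + b/(a+b) = 1" using assms by (simp add: add_divide_distrib[symmetric])
  finally show ?thesis by simp
qed

lemma comb2:
  fixes B I :: "'v::real_vector"
  assumes "a + b \<noteq> 0"
  shows "(1/(a+b)) *\<^sub>R (B + b *\<^sub>R I) + (1/(a+b)) *\<^sub>R (a *\<^sub>R I - B) = I"
proof -
  have "(1/(a+b)) *\<^sub>R (B + b *\<^sub>R I) + (1/(a+b)) *\<^sub>R (a *\<^sub>R I - B)
      = (1/(a+b)) *\<^sub>R ((B + b *\<^sub>R I) + (a *\<^sub>R I - B))" by (rule scaleR_add_right[symmetric])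
  also have "(B + b *\<^sub>R I) + (a *\<^sub>R I - B) = (a + b) *\<^sub>R I" by (simp add: algebra_simps)
  finally show ?thesis using assms by simp
qed

lemma construct:
  fixes A :: "complex^'n^'n" and B :: "complex^'k^'k"
  assumes hB: "hermitian B" and u: "norm u = 1" and w: "norm w = 1"
    and Au: "A *v u = complex_of_real a *s u" and Aw: "A *v w = complex_of_real (- b) *s w"
    and a: "a > 0" and b: "b > 0"
    and bnd: "\<And>v. Re (quad_form B v) \<le> a * norm v ^ 2 \<and> - b * norm v ^ 2 \<le> Re (quad_form B v)"
  shows "\<exists>\<Phi> :: complex^'n^'n \<Rightarrow> complex^'k^'k. positive_unital_map \<Phi> \<and> \<Phi> A = B"
proof -
  define Q1 where "Q1 = (1 / (a + b)) *\<^sub>R (B + b *\<^sub>R mat 1)"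
  define Q2 where "Q2 = (1 / (a + b)) *\<^sub>R (a *\<^sub>R mat 1 - B)"
  define \<Phi> where "\<Phi> X = Re (cinner u (X *v u)) *\<^sub>R Q1 + Re (cinner w (X *v w)) *\<^sub>R Q2"
    for X :: "complex^'n^'n"
  have hQ1: "hermitian Q1" unfolding Q1_def
    by (intro hermitian_scaleR hermitian_add hB hermitian_mat1)
  have hQ2: "hermitian Q2" unfolding Q2_def
    by (intro hermitian_scaleR hermitian_diff hB hermitian_mat1)
  have ab: "a + b > 0" using a b by simp
  have pQ1: "psd Q1" unfolding psd_iff
  proof (intro conjI allI hQ1)
    fix v
    have "Re (quad_form Q1 v) = (Re (quad_form B v) + b * norm v ^ 2) / (a + b)"
      by (simp add: Q1_def quad_scaleR quad_add quad_mat1)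
    thus "0 \<le> Re (quad_form Q1 v)" using bnd[of v] ab by simp
  qed
  have pQ2: "psd Q2" unfolding psd_iff
  proof (intro conjI allI hQ2)
    fix v
    have "Re (quad_form Q2 v) = (a * norm v ^ 2 - Re (quad_form B v)) / (a + b)"
      by (simp add: Q2_def quad_scaleR quad_diff quad_mat1)
    thus "0 \<le> Re (quad_form Q2 v)" using bnd[of v] ab by simp
  qed
  have psd_comb: "psd (r *\<^sub>R Q1 + s *\<^sub>R Q2)" if "0 \<le> r" "0 \<le> s" for r s
    unfolding psd_iff
  proof (intro conjI allI)
    show "hermitian (r *\<^sub>R Q1 + s *\<^sub>R Q2)" by (intro hermitian_add hermitian_scaleR hQ1 hQ2)
    fix v
    have "0 \<le> Re (quad_form Q1 v)" "0 \<le> Re (quad_form Q2 v)" using pQ1 pQ2 by (auto simp: psd_iff)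
    thus "0 \<le> Re (quad_form (r *\<^sub>R Q1 + s *\<^sub>R Q2) v)"
      using that by (simp add: quad_add quad_scaleR)
  qed
  have uu: "cinner u u = 1" using u by (simp add: cinner_self)
  have ww: "cinner w w = 1" using w by (simp add: cinner_self)
  have "positive_unital_map \<Phi>"
    unfolding positive_unital_map_def
  proof (intro conjI allI impI)
    fix X :: "complex^'n^'n"
    show "hermitian (\<Phi> X)" unfolding \<Phi>_def by (intro hermitian_add hermitian_scaleR hQ1 hQ2)
  next
    fix X Y :: "complex^'n^'n"
    show "\<Phi> (X + Y) = \<Phi> X + \<Phi> Y"
      by (simp add: \<Phi>_def matrix_vector_mult_add_rdistrib cinner_add_right scaleR_add_left algebra_simps)
  next
    fix r :: real and X :: "complex^'n^'n"
    show "\<Phi> (r *\<^sub>R X) = r *\<^sub>R \<Phi> X"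
      by (simp add: \<Phi>_def mv_scaleR cinner_scale_right scaleR_add_right)
  next
    fix X :: "complex^'n^'n"
    assume "psd X"
    hence "0 \<le> Re (cinner u (X *v u))" "0 \<le> Re (cinner w (X *v w))"
      by (auto simp: psd_iff quad_form_cinner)
    thus "psd (\<Phi> X)" unfolding \<Phi>_def by (rule psd_comb)
  next
    have "\<Phi> (mat 1) = Q1 + Q2" by (simp add: \<Phi>_def uu ww)
    also have "\<dots> = mat 1"
      unfolding Q1_def Q2_def by (rule comb2) (use ab in simp)
    finally show "\<Phi> (mat 1) = mat 1" .
  qed
  moreover have "\<Phi> A = B"
  proof -
    have "\<Phi> A = a *\<^sub>R Q1 + (- b) *\<^sub>R Q2"
      by (simp add: \<Phi>_def Au Aw cinner_scale_right cinner_neg_right uu ww)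
    also have "\<dots> = B"
      unfolding Q1_def Q2_def by (rule comb1) (use ab in simp)
    finally show ?thesis .
  qed
  ultimately show ?thesis by blast
qed

theorem mainTheorem8:
  fixes A :: "complex^'n^'n" and B :: "complex^'k^'k"
  assumes "hermitian A" and "hermitian B"
    and "\<not> psd A" and "\<not> psd (- A)"
    and "\<not> psd B" and "\<not> psd (- B)"
    and "op_norm (pos_part A) = op_norm (pos_part B)"
    and "op_norm (neg_part A) = op_norm (neg_part B)"
  shows "(\<exists>\<Phi> :: complex^'n^'n \<Rightarrow> complex^'k^'k. positive_unital_map \<Phi> \<and> \<Phi> A = B) \<and>
         (\<exists>\<Phi>' :: complex^'k^'k \<Rightarrow> complex^'n^'n. positive_unital_map \<Phi>' \<and> \<Phi>' B = A)"
proof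
  obtain u w where kA: "norm u = 1" "norm w = 1"
    "A *v u = complex_of_real (op_norm (pos_part A)) *s u"
    "A *v w = complex_of_real (- op_norm (neg_part A)) *s w"
    "op_norm (pos_part A) > 0" "op_norm (neg_part A) > 0"
    "\<And>v. Re (quad_form A v) \<le> op_norm (pos_part A) * norm v ^ 2 \<and>
         - op_norm (neg_part A) * norm v ^ 2 \<le> Re (quad_form A v)"
    using key[OF assms(1,3,4)] by blast
  obtain u' w' where kB: "norm u' = 1" "norm w' = 1"
    "B *v u' = complex_of_real (op_norm (pos_part B)) *s u'"
    "B *v w' = complex_of_real (- op_norm (neg_part B)) *s w'"
    "op_norm (pos_part B) > 0" "op_norm (neg_part B) > 0"
    "\<And>v. Re (quad_form B v) \<le> op_norm (pos_part B) * norm v ^ 2 \<and>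
         - op_norm (neg_part B) * norm v ^ 2 \<le> Re (quad_form B v)"
    using key[OF assms(2,5,6)] by blast
  show "\<exists>\<Phi> :: complex^'n^'n \<Rightarrow> complex^'k^'k. positive_unital_map \<Phi> \<and> \<Phi> A = B"
    by (rule construct[OF assms(2) kA(1-6)]) (use kB(7) assms(7,8) in simp)
  show "\<exists>\<Phi>' :: complex^'k^'k \<Rightarrow> complex^'n^'n. positive_unital_map \<Phi>' \<and> \<Phi>' B = A"
    by (rule construct[OF assms(1) kB(1-6)]) (use kA(7) assms(7,8) in simp)
qed

end
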